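(* Let $k$ be a perfect field of characteristic $p>0$, $P$ a finite poset, $R=\mathcal{R}_k[J(P)]$ the Hibi ring and $\mathfrak{m}=R_+$. Let $\overline{P}=P\cup\{-\infty,\infty\}$ and let $\Sigma$ be the set of functions $\psi:\overline{P}\to\mathbb{R}$ such that $\psi(\infty)=0$ and $0\le\psi(x)-\psi(y)\le1$ whenever $x\lessdot y$ in $\overline{P}$. Then \[ \operatorname{fpt}(\mathfrak{m})=\max\{\psi(-\infty)\mid\psi\in\Sigma\}. \]
   Context: $J(P)$ is the set of poset ideals of $P=\{p_1,\dots,p_N\}$ (down-closed subsets, including $\emptyset$ and $P$). The Hibi ring is $\mathcal{R}_k[J(P)]=k[\,T\prod_{p_i\in I}X_i\mid I\in J(P)\,]\subseteq k[T,X_1,\dots,X_N]$, each generator in degree $1$; $\mathfrak{m}=R_+$ is generated by these generators. In $\overline{P}$, $-\infty<x<\infty$ for all $x\in P$; $x\lessdot y$ means $x<y$ with no $z$ satisfying $x<z<y$. For a real $t\ge0$, the pair $(R,\mathfrak{m}^t)$ is $F$-pure if for all large $q=p^e$ there is $d\in\mathfrak{m}^{\lceil t(q-1)\rceil}$ such that the $R$-linear map $R\to R^{1/q}$, $1\mapsto d^{1/q}$, splits; $\operatorname{fpt}(\mathfrak{m})=\sup\{t\ge0\mid(R,\mathfrak{m}^t)\text{ is }F\text{-pure}\}$. *)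

theory Defs
  imports Complex_Main "HOL-Library.Poly_Mapping" "HOL-Computational_Algebra.Primes"
begin

text \<open>Polynomial ring k[T, X_p (p in P)]: monomials are exponent vectors indexed by
  'a option, where None stands for T and Some p for X_p.\<close>
type_synonym ('a, 'k) mpoly = "('a option \<Rightarrow>\<^sub>0 nat) \<Rightarrow>\<^sub>0 'k"

definition poset_ideals :: "'a::order set \<Rightarrow> 'a set set" where
  "poset_ideals P = {I. I \<subseteq> P \<and> (\<forall>x\<in>I. \<forall>y\<in>P. y \<le> x \<longrightarrow> y \<in> I)}"

definition hibi_gen :: "'a set \<Rightarrow> ('a, 'k::comm_ring_1) mpoly" where
  "hibi_gen I = Poly_Mapping.single
      (Poly_Mapping.single None 1 + (\<Sum>p\<in>I. Poly_Mapping.single (Some p) 1)) 1"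

inductive_set hibi_ring :: "'a::order set \<Rightarrow> ('a, 'k::comm_ring_1) mpoly set"
  for P :: "'a set" where
  const: "Poly_Mapping.single 0 c \<in> hibi_ring P"
| gen: "I \<in> poset_ideals P \<Longrightarrow> hibi_gen I \<in> hibi_ring P"
| add: "x \<in> hibi_ring P \<Longrightarrow> y \<in> hibi_ring P \<Longrightarrow> x + y \<in> hibi_ring P"
| mult: "x \<in> hibi_ring P \<Longrightarrow> y \<in> hibi_ring P \<Longrightarrow> x * y \<in> hibi_ring P"

definition is_ideal_in :: "'r::comm_ring_1 set \<Rightarrow> 'r set \<Rightarrow> bool" where
  "is_ideal_in R I \<longleftrightarrow> I \<subseteq> R \<and> 0 \<in> I \<and> (\<forall>x\<in>I. \<forall>y\<in>I. x + y \<in> I)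
      \<and> (\<forall>r\<in>R. \<forall>x\<in>I. r * x \<in> I)"

definition ideal_gen :: "'r::comm_ring_1 set \<Rightarrow> 'r set \<Rightarrow> 'r set" where
  "ideal_gen R S = \<Inter>{I. is_ideal_in R I \<and> S \<subseteq> I}"

fun ideal_pow :: "'r::comm_ring_1 set \<Rightarrow> 'r set \<Rightarrow> nat \<Rightarrow> 'r set" where
  "ideal_pow R I 0 = R"
| "ideal_pow R I (Suc n) = ideal_gen R {a * b | a b. a \<in> ideal_pow R I n \<and> b \<in> I}"

definition hibi_max :: "'a::order set \<Rightarrow> ('a, 'k::comm_ring_1) mpoly set" where
  "hibi_max P = ideal_gen (hibi_ring P) (hibi_gen ` poset_ideals P)"

text \<open>The R-linear map R -> R^{1/q}, 1 |-> d^{1/q} splits.  Identifying R^{1/q} with R via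
  x^{1/q} <-> x (so r acts on R^{1/q} as x |-> r^q x), a splitting is an additive
  map phi : R -> R with phi (r^q x) = r phi(x) and phi(d) = 1.\<close>
definition frob_splits :: "'r::comm_ring_1 set \<Rightarrow> nat \<Rightarrow> 'r \<Rightarrow> bool" where
  "frob_splits R q d \<longleftrightarrow> (\<exists>\<phi>. (\<forall>x\<in>R. \<phi> x \<in> R)
      \<and> (\<forall>x\<in>R. \<forall>y\<in>R. \<phi> (x + y) = \<phi> x + \<phi> y)
      \<and> (\<forall>r\<in>R. \<forall>x\<in>R. \<phi> (r ^ q * x) = r * \<phi> x)
      \<and> \<phi> d = 1)"

definition F_pure_pair :: "nat \<Rightarrow> 'r::comm_ring_1 set \<Rightarrow> 'r set \<Rightarrow> real \<Rightarrow> bool" where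
  "F_pure_pair p R m t \<longleftrightarrow> (\<exists>e0. \<forall>e\<ge>e0. \<exists>d\<in>ideal_pow R m (nat \<lceil>t * (real (p ^ e) - 1)\<rceil>).
      frob_splits R (p ^ e) d)"

definition fpt :: "nat \<Rightarrow> 'r::comm_ring_1 set \<Rightarrow> 'r set \<Rightarrow> real" where
  "fpt p R m = Sup {t. t \<ge> 0 \<and> F_pure_pair p R m t}"

datatype 'a ext = NegInf | Elt 'a | PosInf

definition ext_carrier :: "'a set \<Rightarrow> 'a ext set" where
  "ext_carrier P = {NegInf, PosInf} \<union> Elt ` P"

fun ext_less :: "'a::order ext \<Rightarrow> 'a ext \<Rightarrow> bool" where
  "ext_less NegInf y = (y \<noteq> NegInf)"
| "ext_less (Elt x) PosInf = True"
| "ext_less (Elt x) (Elt y) = (x < y)"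
| "ext_less _ _ = False"

definition ext_covers :: "'a::order set \<Rightarrow> 'a ext \<Rightarrow> 'a ext \<Rightarrow> bool" where
  "ext_covers P x y \<longleftrightarrow> x \<in> ext_carrier P \<and> y \<in> ext_carrier P \<and> ext_less x y
      \<and> \<not> (\<exists>z\<in>ext_carrier P. ext_less x z \<and> ext_less z y)"

definition Sigma_set :: "'a::order set \<Rightarrow> ('a ext \<Rightarrow> real) set" where
  "Sigma_set P = {\<psi>. \<psi> PosInf = 0 \<and>
      (\<forall>x y. ext_covers P x y \<longrightarrow> 0 \<le> \<psi> x - \<psi> y \<and> \<psi> x - \<psi> y \<le> 1)}"

end

theory Submission
  imports Defs
begin

definition ext_le :: "'a::order ext \<Rightarrow> 'a ext \<Rightarrow> bool" where
  "ext_le x y \<longleftrightarrow> x = y \<or> ext_less x y"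

lemma ext_less_trans: "ext_less x y \<Longrightarrow> ext_less y z \<Longrightarrow> ext_less x z"
  by (cases x; cases y; cases z) auto

lemma ext_less_irrefl[simp]: "\<not> ext_less x x"
  by (cases x) auto

lemma ext_less_asym: "ext_less x y \<Longrightarrow> \<not> ext_less y x"
  by (cases x; cases y) auto

lemma ext_le_less_trans: "ext_le x y \<Longrightarrow> ext_less y z \<Longrightarrow> ext_less x z"
  unfolding ext_le_def using ext_less_trans by blast

lemma ext_less_le_trans: "ext_less x y \<Longrightarrow> ext_le y z \<Longrightarrow> ext_less x z"
  unfolding ext_le_def using ext_less_trans by blast

lemma finite_carrier: "finite P \<Longrightarrow> finite (ext_carrier P)"
  unfolding ext_carrier_def by auto

lemma carrier_simps[simp]:
  "NegInf \<in> ext_carrier P" "PosInf \<in> ext_carrier P" "Elt a \<in> ext_carrier P \<longleftrightarrow> a \<in> P"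
  unfolding ext_carrier_def by auto

lemma covers_D: "ext_covers P x y \<Longrightarrow> x \<in> ext_carrier P \<and> y \<in> ext_carrier P \<and> ext_less x y"
  unfolding ext_covers_def by auto

lemma finite_min_ex:
  assumes "finite A" "A \<noteq> {}"
  shows "\<exists>z\<in>A. \<forall>w\<in>A. \<not> ext_less w z"
  using assms
proof (induction rule: finite_ne_induct)
  case (singleton x) then show ?case by auto
next
  case (insert a A)
  then obtain m where m: "m \<in> A" "\<forall>w\<in>A. \<not> ext_less w m" by auto
  show ?case
  proof (cases "ext_less a m")
    case True
    then show ?thesis using m ext_less_trans by (metis ext_less_irrefl insert_iff)
  next
    case False
    then show ?thesis using m by auto
  qed
qed

lemma cover_exists:
  assumes "finite P" "x \<in> ext_carrier P" "y \<in> ext_carrier P" "ext_less x y"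
  shows "\<exists>z. ext_covers P x z \<and> ext_le z y"
proof -
  let ?A = "{z\<in>ext_carrier P. ext_less x z \<and> ext_le z y}"
  have "finite ?A" using finite_carrier[OF assms(1)] by auto
  moreover have "?A \<noteq> {}" using assms by (auto simp: ext_le_def)
  ultimately obtain z where z: "z \<in> ?A" "\<forall>w\<in>?A. \<not> ext_less w z"
    using finite_min_ex by blast
  have "ext_covers P x z"
    unfolding ext_covers_def using z assms(2) ext_less_le_trans
    by (metis (no_types, lifting) ext_le_def mem_Collect_eq)
  then show ?thesis using z by auto
qed

lemma above_card_less:
  assumes "finite P" "ext_covers P x z"
  shows "card {w\<in>ext_carrier P. ext_less z w} < card {w\<in>ext_carrier P. ext_less x w}"
proof (rule psubset_card_mono)
  show "finite {w\<in>ext_carrier P. ext_less x w}" using finite_carrier[OF assms(1)] by auto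
  have c: "x \<in> ext_carrier P" "z \<in> ext_carrier P" "ext_less x z" using covers_D[OF assms(2)] by auto
  show "{w\<in>ext_carrier P. ext_less z w} \<subset> {w\<in>ext_carrier P. ext_less x w}"
  proof -
    have "{w\<in>ext_carrier P. ext_less z w} \<subseteq> {w\<in>ext_carrier P. ext_less x w}"
      using c ext_less_trans by blast
    moreover have "z \<notin> {w\<in>ext_carrier P. ext_less z w}" by simp
    moreover have "z \<in> {w\<in>ext_carrier P. ext_less x w}" using c by simp
    ultimately show ?thesis by blast
  qed
qed

lemma mono_ext:
  fixes f :: "'a::order ext \<Rightarrow> 'b::order"
  assumes fin: "finite P" and cov: "\<And>x y. ext_covers P x y \<Longrightarrow> f y \<le> f x"
  shows "x \<in> ext_carrier P \<Longrightarrow> y \<in> ext_carrier P \<Longrightarrow> ext_le x y \<Longrightarrow> f y \<le> f x"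
proof (induction "card {z\<in>ext_carrier P. ext_less x z}" arbitrary: x rule: less_induct)
  case (less x)
  show ?case
  proof (cases "x = y")
    case True then show ?thesis by simp
  next
    case False
    then have "ext_less x y" using less.prems by (auto simp: ext_le_def)
    then obtain z where z: "ext_covers P x z" "ext_le z y"
      using cover_exists[OF fin less.prems(1,2)] by blast
    have "f y \<le> f z"
      using less.hyps[OF above_card_less[OF fin z(1)]] covers_D[OF z(1)] z(2) less.prems by blast
    also have "\<dots> \<le> f x" using cov[OF z(1)] .
    finally show ?thesis .
  qed
qed

lemma mono_ext_posinf:
  fixes f :: "'a::order ext \<Rightarrow> 'b::order"
  assumes fin: "finite P" and cov: "\<And>x y. ext_covers P x y \<Longrightarrow> f y \<le> f x"
    and "x \<in> ext_carrier P"
  shows "f PosInf \<le> f x"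
proof -
  have "ext_le x PosInf" by (cases x) (auto simp: ext_le_def)
  then show ?thesis using mono_ext[OF fin, of f x PosInf] cov assms(3) by simp
qed

lemma mono_ext_neginf:
  fixes f :: "'a::order ext \<Rightarrow> 'b::order"
  assumes fin: "finite P" and cov: "\<And>x y. ext_covers P x y \<Longrightarrow> f y \<le> f x"
    and "x \<in> ext_carrier P"
  shows "f x \<le> f NegInf"
proof -
  have "ext_le NegInf x" by (cases x) (auto simp: ext_le_def)
  then show ?thesis using mono_ext[OF fin, of f NegInf x] cov assms(3) by simp
qed

lemma Sigma_bound:
  assumes fin: "finite P" and psi: "\<psi> \<in> Sigma_set P"
  shows "x \<in> ext_carrier P \<Longrightarrow> \<psi> x \<le> real (card {z\<in>ext_carrier P. ext_less x z})"
proof (induction "card {z\<in>ext_carrier P. ext_less x z}" arbitrary: x rule: less_induct)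
  case (less x)
  show ?case
  proof (cases "x = PosInf")
    case True then show ?thesis using psi by (simp add: Sigma_set_def)
  next
    case False
    then have "ext_less x PosInf" by (cases x) auto
    then obtain z where z: "ext_covers P x z" "ext_le z PosInf"
      using cover_exists[OF fin less.prems, of PosInf] by auto
    have lt: "card {w\<in>ext_carrier P. ext_less z w} < card {w\<in>ext_carrier P. ext_less x w}"
      using above_card_less[OF fin z(1)] .
    have "\<psi> z \<le> real (card {w\<in>ext_carrier P. ext_less z w})"
      using less.hyps[OF lt] covers_D[OF z(1)] by blast
    moreover have "\<psi> x - \<psi> z \<le> 1" using psi z(1) by (auto simp: Sigma_set_def)
    ultimately show ?thesis using lt by linarith
  qed
qed



abbreviation lookup where "lookup \<equiv> Poly_Mapping.lookup"
abbreviation keys where "keys \<equiv> Poly_Mapping.keys"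

type_synonym 'a mon = "'a option \<Rightarrow>\<^sub>0 nat"

definition ev :: "'a mon \<Rightarrow> 'a ext \<Rightarrow> int" where
  "ev w x = (case x of NegInf \<Rightarrow> int (lookup w None) | Elt p \<Rightarrow> int (lookup w (Some p)) | PosInf \<Rightarrow> 0)"

lemma ev_simps[simp]: "ev w NegInf = int (lookup w None)" "ev w (Elt p) = int (lookup w (Some p))"
  "ev w PosInf = 0"
  by (simp_all add: ev_def)

lemma ev_add[simp]: "ev (a + b) x = ev a x + ev b x"
  by (cases x) (simp_all add: lookup_add)

lemma ev_zero[simp]: "ev 0 x = 0"
  by (cases x) simp_all

lemma ev_sum: "ev (sum f A) x = (\<Sum>i\<in>A. ev (f i) x)"
  by (induction A rule: infinite_finite_induct) auto

lemma ev_nonneg: "0 \<le> ev w x"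
  by (cases x) simp_all

definition incone :: "'a::order set \<Rightarrow> 'a mon \<Rightarrow> bool" where
  "incone P w \<longleftrightarrow> keys w \<subseteq> insert None (Some ` P) \<and>
     (\<forall>x y. ext_covers P x y \<longrightarrow> ev w y \<le> ev w x)"

lemma incone_zero[simp]: "incone P 0"
  by (simp add: incone_def)

lemma incone_add: "incone P a \<Longrightarrow> incone P b \<Longrightarrow> incone P (a + b)"
  unfolding incone_def using keys_add[of a b] by (auto simp: add_mono)

lemma incone_sum: "(\<And>i. i \<in> A \<Longrightarrow> incone P (f i)) \<Longrightarrow> incone P (sum f A)"
  by (induction A rule: infinite_finite_induct) (auto intro: incone_add)

lemma incone_outside: "incone P w \<Longrightarrow> p \<notin> P \<Longrightarrow> lookup w (Some p) = 0"
  unfolding incone_def by (auto simp: in_keys_iff)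

lemma incone_mono:
  assumes "finite P" "incone P w" "x \<in> ext_carrier P" "y \<in> ext_carrier P" "ext_le x y"
  shows "ev w y \<le> ev w x"
  using mono_ext[OF assms(1), of "ev w" x y] assms by (auto simp: incone_def)

definition gexp :: "'a set \<Rightarrow> 'a mon" where
  "gexp I = Poly_Mapping.single None 1 + (\<Sum>p\<in>I. Poly_Mapping.single (Some p) 1)"

lemma hibi_gen_gexp: "hibi_gen I = Poly_Mapping.single (gexp I) 1"
  by (simp add: hibi_gen_def gexp_def)

lemma lookup_gexp:
  assumes "finite I"
  shows "lookup (gexp I) None = 1" "lookup (gexp I) (Some p) = (if p \<in> I then 1 else 0)"
  using assms by (simp_all add: gexp_def lookup_add lookup_sum lookup_single when_def)

lemma ideal_finite: "finite P \<Longrightarrow> I \<in> poset_ideals P \<Longrightarrow> finite I"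
  unfolding poset_ideals_def by (auto intro: finite_subset)

lemma ev_gexp:
  assumes "finite I"
  shows "ev (gexp I) x = (case x of NegInf \<Rightarrow> 1 | Elt p \<Rightarrow> (if p \<in> I then 1 else 0) | PosInf \<Rightarrow> 0)"
  using assms by (cases x) (simp_all add: lookup_gexp)

lemma ev_gexp_01: "finite I \<Longrightarrow> ev (gexp I) x \<in> {0,1}"
  by (cases x) (auto simp: lookup_gexp)

lemma incone_gexp:
  assumes fin: "finite P" and I: "I \<in> poset_ideals P"
  shows "incone P (gexp I)"
proof -
  have fI: "finite I" using ideal_finite[OF fin I] .
  have IP: "I \<subseteq> P" and dc: "\<And>x y. x \<in> I \<Longrightarrow> y \<in> P \<Longrightarrow> y \<le> x \<Longrightarrow> y \<in> I"
    using I by (auto simp: poset_ideals_def)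
  have k: "keys (gexp I) \<subseteq> insert None (Some ` P)"
  proof
    fix i assume "i \<in> keys (gexp I)"
    then show "i \<in> insert None (Some ` P)"
      using IP by (cases i) (auto simp: in_keys_iff lookup_gexp[OF fI] split: if_splits)
  qed
  have "ev (gexp I) y \<le> ev (gexp I) x" if c: "ext_covers P x y" for x y
  proof -
    have cc: "x \<in> ext_carrier P" "y \<in> ext_carrier P" "ext_less x y" using covers_D[OF c] by auto
    show ?thesis
      using cc dc by (cases x; cases y) (auto simp: lookup_gexp[OF fI])
  qed
  then show ?thesis using k by (simp add: incone_def)
qed

lemma R_incone:
  assumes fin: "finite P"
  shows "f \<in> hibi_ring P \<Longrightarrow> \<forall>w\<in>keys f. incone P w"
proof (induction rule: hibi_ring.induct)
  case (const c) then show ?case by simp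
next
  case (gen I) then show ?case by (simp add: hibi_gen_gexp incone_gexp[OF fin])
next
  case (add x y) then show ?case using keys_add[of x y] by blast
next
  case (mult x y)
  show ?case
  proof
    fix a assume "a \<in> keys (x * y)"
    then obtain a1 a2 where "a = a1 + a2" "a1 \<in> keys x" "a2 \<in> keys y"
      using keys_mult[of x y] by blast
    then show "incone P a" using mult.IH by (auto intro: incone_add)
  qed
qed

lemma zero_in_R[simp]: "0 \<in> hibi_ring P"
  using hibi_ring.const[of 0 P] by simp

lemma one_in_R[simp]: "1 \<in> hibi_ring P"
  using hibi_ring.const[of 1 P] by simp

lemma sum_in_R: "(\<And>i. i \<in> A \<Longrightarrow> f i \<in> hibi_ring P) \<Longrightarrow> sum f A \<in> hibi_ring P"
  by (induction A rule: infinite_finite_induct) (auto intro: hibi_ring.add)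

lemma decomp:
  assumes fin: "finite P" and w: "incone P w" and pos: "1 \<le> lookup w None"
  shows "\<exists>I w'. I \<in> poset_ideals P \<and> incone P w' \<and> lookup w' None = lookup w None - 1
           \<and> w = gexp I + w'"
proof -
  define I where "I = {p\<in>P. 1 \<le> lookup w (Some p)}"
  define w' where "w' = Poly_Mapping.map (\<lambda>v. v - 1) w"
  have lw': "lookup w' i = lookup w i - 1" for i
    by (simp add: w'_def map.rep_eq when_def)
  have fI: "finite I" using fin by (simp add: I_def)
  have I: "I \<in> poset_ideals P"
  proof -
    have "y \<in> I" if "x \<in> I" "y \<in> P" "y \<le> x" for x y
    proof -
      have "ev w (Elt x) \<le> ev w (Elt y)"
        using incone_mono[OF fin w, of "Elt y" "Elt x"] that
        by (auto simp: I_def ext_le_def order.order_iff_strict)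
      then show ?thesis using that by (auto simp: I_def)
    qed
    then show ?thesis by (auto simp: poset_ideals_def I_def)
  qed
  have evw': "ev w' x = max (ev w x - 1) 0" for x
    by (cases x) (auto simp: lw')
  have cw': "incone P w'"
  proof -
    have "keys w' \<subseteq> keys w" by (auto simp: in_keys_iff lw')
    moreover have "ev w' y \<le> ev w' x" if "ext_covers P x y" for x y
    proof -
      have "ev w y \<le> ev w x" using w that by (auto simp: incone_def)
      then show ?thesis by (auto simp: evw' max_def)
    qed
    ultimately show ?thesis using w by (auto simp: incone_def)
  qed
  have lg: "lookup (gexp I) (Some p) = (if p \<in> P \<and> 1 \<le> lookup w (Some p) then 1 else 0)" for p
    using lookup_gexp(2)[OF fI, of p] by (simp add: I_def)
  have eq: "w = gexp I + w'"
  proof (rule poly_mapping_eqI)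
    fix i show "lookup w i = lookup (gexp I + w') i"
    proof (cases i)
      case None then show ?thesis using pos by (simp add: lookup_add lookup_gexp[OF fI] lw')
    next
      case (Some p)
      show ?thesis
      proof (cases "p \<in> P")
        case True then show ?thesis using Some by (simp add: lookup_add lg lw')
      next
        case False then show ?thesis using Some incone_outside[OF w False]
          by (simp add: lookup_add lg lw')
      qed
    qed
  qed
  show ?thesis using I cw' eq lw' by blast
qed

lemma mono_zero:
  assumes fin: "finite P" and w: "incone P w" and z: "lookup w None = 0"
  shows "w = 0"
proof (rule poly_mapping_eqI)
  fix i show "lookup w i = lookup 0 i"
  proof (cases i)
    case None then show ?thesis using z by simp
  next
    case (Some p)
    show ?thesis
    proof (cases "p \<in> P")
      case True
      have "ev w (Elt p) \<le> ev w NegInf"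
        using incone_mono[OF fin w, of NegInf "Elt p"] True by (simp add: ext_le_def)
      then show ?thesis using Some z by simp
    next
      case False then show ?thesis using Some incone_outside[OF w] by simp
    qed
  qed
qed

lemma mono_in_R:
  assumes fin: "finite P"
  shows "incone P w \<Longrightarrow> Poly_Mapping.single w (1::'k::comm_ring_1) \<in> hibi_ring P"
proof (induction "lookup w None" arbitrary: w)
  case 0
  then have "w = 0" using mono_zero[OF fin] by simp
  then show ?case using one_in_R by simp
next
  case (Suc n)
  obtain I w' where d: "I \<in> poset_ideals P" "incone P w'" "lookup w' None = lookup w None - 1"
    "w = gexp I + w'" using decomp[OF fin Suc.prems] Suc.hyps(2) by fastforce
  have "n = lookup w' None" using d(3) Suc.hyps(2) by simp
  then have "Poly_Mapping.single w' (1::'k) \<in> hibi_ring P" using Suc.hyps(1)[of w'] d(2) by simp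
  moreover have "(hibi_gen I :: ('a,'k) mpoly) \<in> hibi_ring P" using d(1) by (rule hibi_ring.gen)
  ultimately have "Poly_Mapping.single w' (1::'k) * hibi_gen I \<in> hibi_ring P" by (rule hibi_ring.mult)
  then show ?case using d(4) by (simp add: hibi_gen_gexp mult_single add.commute)
qed

lemma pm_sum_single: "f = (\<Sum>k\<in>keys f. Poly_Mapping.single k (lookup f k))"
proof (rule poly_mapping_eqI)
  fix i
  have "(\<Sum>k\<in>keys f. lookup (Poly_Mapping.single k (lookup f k)) i) = lookup f i"
    by (simp add: lookup_single when_def in_keys_iff)
  then show "lookup f i = lookup (\<Sum>k\<in>keys f. Poly_Mapping.single k (lookup f k)) i"
    by (simp add: lookup_sum)
qed

lemma single_scale: "Poly_Mapping.single k (c::'b::comm_semiring_1) = Poly_Mapping.single 0 c * Poly_Mapping.single k 1"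
  by (simp add: mult_single)

lemma incone_in_R:
  assumes fin: "finite P" and k: "\<forall>w\<in>keys f. incone P w"
  shows "(f :: ('a::order,'k::comm_ring_1) mpoly) \<in> hibi_ring P"
proof -
  have "(\<Sum>k\<in>keys f. Poly_Mapping.single k (lookup f k)) \<in> hibi_ring P"
  proof (rule sum_in_R)
    fix w assume "w \<in> keys f"
    then have "Poly_Mapping.single w (1::'k) \<in> hibi_ring P" using mono_in_R[OF fin] k by blast
    then show "Poly_Mapping.single w (lookup f w) \<in> hibi_ring P"
      by (subst single_scale) (auto intro: hibi_ring.mult hibi_ring.const)
  qed
  then show ?thesis using pm_sum_single[of f] by simp
qed

lemma R_char: "finite P \<Longrightarrow> f \<in> hibi_ring P \<longleftrightarrow> (\<forall>w\<in>keys f. incone P w)"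
  using R_incone incone_in_R by blast



lemma ideal_gen_least: "is_ideal_in R I \<Longrightarrow> S \<subseteq> I \<Longrightarrow> ideal_gen R S \<subseteq> I"
  unfolding ideal_gen_def by blast

lemma ideal_gen_sup: "S \<subseteq> ideal_gen R S"
  unfolding ideal_gen_def by blast

definition Rge :: "'a::order set \<Rightarrow> nat \<Rightarrow> ('a, 'k::comm_ring_1) mpoly set" where
  "Rge P n = {f\<in>hibi_ring P. \<forall>w\<in>keys f. n \<le> lookup w None}"

lemma Rge_ideal: "is_ideal_in (hibi_ring P) (Rge P n)"
proof -
  have "x + y \<in> Rge P n" if "x \<in> Rge P n" "y \<in> Rge P n" for x y
    using that keys_add[of x y] by (auto simp: Rge_def intro: hibi_ring.add)
  moreover have "r * x \<in> Rge P n" if "r \<in> hibi_ring P" "x \<in> Rge P n" for r x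
  proof -
    have "n \<le> lookup w None" if "w \<in> keys (r * x)" for w
    proof -
      obtain a b where "w = a + b" "a \<in> keys r" "b \<in> keys x"
        using keys_mult[of r x] \<open>w \<in> keys (r * x)\<close> by blast
      then show ?thesis using \<open>x \<in> Rge P n\<close> by (auto simp: Rge_def lookup_add)
    qed
    then show ?thesis using that by (auto simp: Rge_def intro: hibi_ring.mult)
  qed
  moreover have "Rge P n \<subseteq> hibi_ring P" by (auto simp: Rge_def)
  moreover have "0 \<in> Rge P n" by (simp add: Rge_def)
  ultimately show ?thesis unfolding is_ideal_in_def by blast
qed

lemma Rge_0: "Rge P 0 = hibi_ring P"
  by (auto simp: Rge_def)

lemma max_sub_Rge1: "finite P \<Longrightarrow> hibi_max P \<subseteq> Rge P 1"
  unfolding hibi_max_def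
proof (rule ideal_gen_least[OF Rge_ideal])
  assume "finite P"
  show "hibi_gen ` poset_ideals P \<subseteq> Rge P 1"
    using \<open>finite P\<close> by (auto simp: Rge_def hibi_gen_gexp lookup_gexp ideal_finite intro: hibi_ring.gen[unfolded hibi_gen_gexp])
qed

lemma pow_sub_Rge:
  assumes fin: "finite P"
  shows "ideal_pow (hibi_ring P) (hibi_max P) n \<subseteq> (Rge P n :: ('a::order,'k::comm_ring_1) mpoly set)"
proof (induction n)
  case 0 then show ?case by (simp add: Rge_0)
next
  case (Suc n)
  have "a * b \<in> (Rge P (Suc n) :: ('a,'k) mpoly set)" if "a \<in> Rge P n" "b \<in> Rge P 1" for a b
  proof -
    have "Suc n \<le> lookup w None" if "w \<in> keys (a * b)" for w
    proof -
      obtain c d where "w = c + d" "c \<in> keys a" "d \<in> keys b"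
        using keys_mult[of a b] \<open>w \<in> keys (a * b)\<close> by blast
      then show ?thesis using \<open>a \<in> Rge P n\<close> \<open>b \<in> Rge P 1\<close> by (fastforce simp: Rge_def lookup_add)
    qed
    then show ?thesis using that by (auto simp: Rge_def intro: hibi_ring.mult)
  qed
  then show ?case using Suc.IH max_sub_Rge1[OF fin]
    by (auto intro!: ideal_gen_least[OF Rge_ideal])
qed

lemma mono_in_pow:
  assumes fin: "finite P"
  shows "incone P w \<Longrightarrow> n \<le> lookup w None \<Longrightarrow>
    Poly_Mapping.single w (1::'k::comm_ring_1) \<in> ideal_pow (hibi_ring P) (hibi_max P) n"
proof (induction n arbitrary: w)
  case 0 then show ?case using mono_in_R[OF fin] by simp
next
  case (Suc n)
  obtain I w' where d: "I \<in> poset_ideals P" "incone P w'" "lookup w' None = lookup w None - 1"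
    "w = gexp I + w'" using decomp[OF fin Suc.prems(1)] Suc.prems(2) by fastforce
  have a: "Poly_Mapping.single w' (1::'k) \<in> ideal_pow (hibi_ring P) (hibi_max P) n"
    using Suc.IH[OF d(2)] d(3) Suc.prems(2) by simp
  have b: "(hibi_gen I :: ('a,'k) mpoly) \<in> hibi_max P"
    unfolding hibi_max_def using d(1) ideal_gen_sup by blast
  have "Poly_Mapping.single w' (1::'k) * hibi_gen I \<in> ideal_pow (hibi_ring P) (hibi_max P) (Suc n)"
    using a b ideal_gen_sup by fastforce
  then show ?case using d(4) by (simp add: hibi_gen_gexp mult_single add.commute)
qed



definition froot :: "nat \<Rightarrow> 'k::field \<Rightarrow> 'k" where
  "froot q c = (SOME y. y ^ q = c)"

lemma single_eq0: "Poly_Mapping.single k a = 0 \<longleftrightarrow> a = 0"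
  by (metis lookup_single_eq lookup_zero single_zero)

locale charp =
  fixes p :: nat and tk :: "'k::field itself"
  assumes prime: "prime p" and char: "CHAR('k) = p" and perf: "\<forall>x::'k. \<exists>y. y ^ p = x"
begin

lemma primeC: "prime CHAR('k)" using prime char by simp

lemma ex_root: "\<exists>y::'k. y ^ (p ^ e) = c"
proof (induction e arbitrary: c)
  case 0 then show ?case by simp
next
  case (Suc e)
  obtain z where z: "z ^ (p ^ e) = c" using Suc by blast
  obtain y :: 'k where y: "y ^ p = z" using perf by blast
  have "y ^ (p ^ Suc e) = (y ^ p) ^ (p ^ e)" by (simp add: power_mult[symmetric] mult.commute)
  then show ?case using y z by blast
qed

lemma fd: "((x::'k) + y) ^ (p ^ e) = x ^ (p ^ e) + y ^ (p ^ e)"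
  using freshmans_dream'[OF primeC, of "p ^ e" e] char by simp

lemma frob_inj: "(x::'k) ^ (p ^ e) = y ^ (p ^ e) \<Longrightarrow> x = y"
proof -
  assume h: "x ^ (p ^ e) = y ^ (p ^ e)"
  have "x ^ (p ^ e) = (x - y) ^ (p ^ e) + y ^ (p ^ e)" using fd[of "x - y" y] by simp
  then have "(x - y) ^ (p ^ e) = 0" using h by simp
  then show "x = y" by simp
qed

lemma froot_pow[simp]: "froot (p ^ e) (c::'k) ^ (p ^ e) = c"
  unfolding froot_def using ex_root[of e c] by (rule someI_ex)

lemma froot_unique: "(y::'k) ^ (p ^ e) = c \<Longrightarrow> froot (p ^ e) c = y"
  using frob_inj[of "froot (p ^ e) c" e y] by simp

lemma froot_of_pow[simp]: "froot (p ^ e) ((c::'k) ^ (p ^ e)) = c"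
  by (rule froot_unique) simp

lemma froot_add: "froot (p ^ e) ((a::'k) + b) = froot (p ^ e) a + froot (p ^ e) b"
  by (rule froot_unique) (simp add: fd)

lemma froot_mult: "froot (p ^ e) ((a::'k) * b) = froot (p ^ e) a * froot (p ^ e) b"
  by (rule froot_unique) (simp add: power_mult_distrib)

lemma froot_0[simp]: "froot (p ^ e) (0::'k) = 0"
  by (rule froot_unique) (simp add: prime_gt_0_nat[OF prime])

lemma froot_1[simp]: "froot (p ^ e) (1::'k) = 1"
  by (rule froot_unique) simp

lemma froot_eq_0: "froot (p ^ e) (c::'k) = 0 \<longleftrightarrow> c = 0"
  using froot_pow[of e c] prime_gt_0_nat[OF prime] by (metis froot_0 zero_power zero_less_power)

lemma CHAR_mpoly: "CHAR(('a, 'k) mpoly) = p"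
proof (rule CHAR_eqI)
  have e: "(of_nat n :: ('a,'k) mpoly) = 0 \<longleftrightarrow> (of_nat n :: 'k) = 0" for n
    by (metis single_eq0 single_of_nat)
  show "(of_nat p :: ('a,'k) mpoly) = 0" using e char by (metis of_nat_CHAR)
  show "p dvd x" if "(of_nat x :: ('a,'k) mpoly) = 0" for x
    using that e char by (simp add: of_nat_eq_0_iff_char_dvd)
qed

lemma fd_sum: "(sum f A :: ('a,'k) mpoly) ^ (p ^ e) = (\<Sum>i\<in>A. f i ^ (p ^ e))"
proof -
  have pc: "prime CHAR(('a, 'k) mpoly)" by (subst CHAR_mpoly) (rule prime)
  show ?thesis using freshmans_dream_sum'[OF pc, of "p ^ e" e] by (simp add: CHAR_mpoly)
qed

end



definition smul :: "nat \<Rightarrow> 'a mon \<Rightarrow> 'a mon" where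
  "smul n a = Poly_Mapping.map (\<lambda>v. n * v) a"

lemma lookup_smul[simp]: "lookup (smul n a) i = n * lookup a i"
  by (simp add: smul_def map.rep_eq when_def)

lemma smul_add: "smul n (a + b) = smul n a + smul n b"
  by (rule poly_mapping_eqI) (simp add: lookup_add algebra_simps)

lemma smul_0[simp]: "smul n 0 = 0"
  by (rule poly_mapping_eqI) simp

lemma smul_0_left[simp]: "smul 0 a = 0"
  by (rule poly_mapping_eqI) simp

lemma single_pow: "Poly_Mapping.single a (c::'b::comm_semiring_1) ^ n = Poly_Mapping.single (smul n a) (c ^ n)"
proof (induction n)
  case 0 then show ?case by simp
next
  case (Suc n)
  have "smul (Suc n) a = a + smul n a" by (rule poly_mapping_eqI) (simp add: lookup_add)
  then show ?case using Suc by (simp add: mult_single)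
qed

definition phi :: "nat \<Rightarrow> nat \<Rightarrow> 'a mon \<Rightarrow> ('a, 'k::field) mpoly \<Rightarrow> ('a, 'k) mpoly" where
  "phi p e u f = Abs_poly_mapping (\<lambda>z. froot (p ^ e) (lookup f (smul (p ^ e) z + u)))"

definition good :: "'a::order set \<Rightarrow> nat \<Rightarrow> 'a mon \<Rightarrow> bool" where
  "good P q u \<longleftrightarrow> incone P u \<and> (\<forall>x y. ext_covers P x y \<longrightarrow> ev u x - ev u y \<le> int q - 1)"

lemma int_aux: "(q::int) \<ge> 1 \<Longrightarrow> q * k \<ge> 1 - q \<Longrightarrow> k \<ge> 0"
proof (rule ccontr)
  assume a: "q \<ge> 1" "q * k \<ge> 1 - q" "\<not> k \<ge> 0"
  then have "k \<le> -1" by simp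
  then have "q * k \<le> q * (-1)" using a(1) by (intro mult_left_mono) auto
  then show False using a by simp
qed

lemma divq:
  assumes fin: "finite P" and q: "q \<ge> 1" and a: "incone P a" and b: "incone P b" and u: "good P q u"
    and eq: "\<And>i. q * lookup z i + lookup u i = q * lookup a i + lookup b i"
  shows "(\<forall>i. lookup a i \<le> lookup z i) \<and> (\<forall>p. p \<notin> P \<longrightarrow> lookup z (Some p) = 0) \<and>
         (\<forall>x y. ext_covers P x y \<longrightarrow> ev z y - ev a y \<le> ev z x - ev a x)"
proof -
  define D where "D x = ev z x - ev a x" for x
  have uc: "incone P u" using u by (simp add: good_def)
  have qD: "int q * D x = ev b x - ev u x" for x
  proof (cases x)
    case NegInf then show ?thesis using eq[of None] by (simp add: D_def algebra_simps) (metis of_nat_add of_nat_mult)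
  next
    case (Elt p) then show ?thesis using eq[of "Some p"] by (simp add: D_def algebra_simps) (metis of_nat_add of_nat_mult)
  next
    case PosInf then show ?thesis by (simp add: D_def)
  qed
  have cov: "D y \<le> D x" if c: "ext_covers P x y" for x y
  proof -
    have "ev b y \<le> ev b x" using b c by (simp add: incone_def)
    moreover have "ev u x - ev u y \<le> int q - 1" using u c by (simp add: good_def)
    ultimately have "int q * (D x - D y) \<ge> 1 - int q" using qD[of x] qD[of y] by (simp add: algebra_simps)
    then show ?thesis using int_aux[of "int q" "D x - D y"] q by simp
  qed
  have Dpos: "0 \<le> D x" if "x \<in> ext_carrier P" for x
    using mono_ext_posinf[of P D x, OF fin cov that] by (simp add: D_def)
  have outside: "lookup z (Some p) = 0" if "p \<notin> P" for p
    using eq[of "Some p"] incone_outside[OF a that] incone_outside[OF b that] incone_outside[OF uc that] q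
    by simp
  have le: "lookup a i \<le> lookup z i" for i
  proof (cases i)
    case None then show ?thesis using Dpos[of NegInf] by (simp add: D_def)
  next
    case (Some p)
    show ?thesis
    proof (cases "p \<in> P")
      case True then show ?thesis using Dpos[of "Elt p"] Some by (simp add: D_def)
    next
      case False then show ?thesis using Some incone_outside[OF a False] by simp
    qed
  qed
  show ?thesis using le outside cov by (simp add: D_def)
qed

context charp
begin

lemma phi_fin: "finite {z. froot (p ^ e) (lookup (f::('a,'k) mpoly) (smul (p ^ e) z + u)) \<noteq> 0}"
proof -
  have inj: "inj (\<lambda>z. smul (p ^ e) z + u)"
  proof (rule injI)
    fix z1 z2 :: "'a mon" assume h: "smul (p ^ e) z1 + u = smul (p ^ e) z2 + u"
    show "z1 = z2"
    proof (rule poly_mapping_eqI)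
      fix i have "lookup (smul (p ^ e) z1 + u) i = lookup (smul (p ^ e) z2 + u) i" using h by simp
      then show "lookup z1 i = lookup z2 i" using prime_gt_0_nat[OF prime] by (simp add: lookup_add)
    qed
  qed
  have "{z. froot (p ^ e) (lookup f (smul (p ^ e) z + u)) \<noteq> 0} \<subseteq> (\<lambda>z. smul (p ^ e) z + u) -` keys f"
    by (auto simp: froot_eq_0 in_keys_iff)
  moreover have "finite ((\<lambda>z. smul (p ^ e) z + u) -` keys f)" using finite_vimageI[OF finite_keys inj] .
  ultimately show ?thesis by (rule finite_subset)
qed

lemma lookup_phi: "lookup (phi p e u (f::('a,'k) mpoly)) z = froot (p ^ e) (lookup f (smul (p ^ e) z + u))"
  unfolding phi_def by (simp add: lookup_Abs_poly_mapping[OF phi_fin])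

lemma phi_add: "phi p e u ((f::('a,'k) mpoly) + g) = phi p e u f + phi p e u g"
  by (rule poly_mapping_eqI) (simp add: lookup_phi lookup_add froot_add[of e])

lemma phi_zero[simp]: "phi p e u (0::('a,'k) mpoly) = 0"
  by (rule poly_mapping_eqI) (simp add: lookup_phi)

lemma phi_sum: "phi p e u (sum (f :: _ \<Rightarrow> ('a,'k) mpoly) A) = (\<Sum>i\<in>A. phi p e u (f i))"
  by (induction A rule: infinite_finite_induct) (auto simp: phi_add)

lemma phi_hit: "phi p e u (Poly_Mapping.single (smul (p ^ e) z + u) (c::'k)) = Poly_Mapping.single z (froot (p ^ e) c)"
proof (rule poly_mapping_eqI)
  fix y
  have "smul (p ^ e) z + u = smul (p ^ e) y + u \<longleftrightarrow> z = y"
  proof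
    assume h: "smul (p ^ e) z + u = smul (p ^ e) y + u"
    show "z = y"
    proof (rule poly_mapping_eqI)
      fix i have "lookup (smul (p ^ e) z + u) i = lookup (smul (p ^ e) y + u) i" using h by simp
      then show "lookup z i = lookup y i" using prime_gt_0_nat[OF prime] by (simp add: lookup_add)
    qed
  qed simp
  then show "lookup (phi p e u (Poly_Mapping.single (smul (p ^ e) z + u) c)) y =
    lookup (Poly_Mapping.single z (froot (p ^ e) c)) y"
    by (simp add: lookup_phi lookup_single when_def)
qed

lemma phi_miss: assumes h: "\<And>z. smul (p ^ e) z + u \<noteq> w"
  shows "phi p e u (Poly_Mapping.single w (c::'k)) = 0"
proof (rule poly_mapping_eqI)
  fix y have "w \<noteq> smul (p ^ e) y + u" using h[of y] by metis
  then show "lookup (phi p e u (Poly_Mapping.single w c)) y = lookup 0 y"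
    by (simp add: lookup_phi lookup_single when_def)
qed

lemma phi_mono:
  assumes fin: "finite P" and a: "incone P a" and b: "incone P b" and u: "good P (p ^ e) u"
  shows "phi p e u (Poly_Mapping.single (a :: 'a::order mon) (c::'k) ^ (p ^ e) * Poly_Mapping.single b c')
       = Poly_Mapping.single a c * phi p e u (Poly_Mapping.single b c')"
proof -
  let ?q = "p ^ e"
  have q1: "?q \<ge> 1" using prime_gt_0_nat[OF prime] by simp
  have lhs: "Poly_Mapping.single a c ^ ?q * Poly_Mapping.single b c' = Poly_Mapping.single (smul ?q a + b) (c ^ ?q * c')"
    by (simp add: single_pow mult_single)
  show ?thesis
  proof (cases "\<exists>z'. smul ?q z' + u = b")
    case True
    then obtain z' where z': "smul ?q z' + u = b" by blast
    have e1: "smul ?q a + b = smul ?q (a + z') + u" using z' by (simp add: smul_add add.assoc)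
    have e2: "phi p e u (Poly_Mapping.single b c') = Poly_Mapping.single z' (froot ?q c')"
      using phi_hit[where z=z' and c=c' and e=e and u=u] z' by simp
    show ?thesis unfolding lhs e1 e2 phi_hit by (simp add: froot_mult mult_single)
  next
    case False
    have "smul ?q z + u \<noteq> smul ?q a + b" for z
    proof
      assume h: "smul ?q z + u = smul ?q a + b"
      have eq: "?q * lookup z i + lookup u i = ?q * lookup a i + lookup b i" for i
        using arg_cong[OF h, of "\<lambda>f. lookup f i"] by (simp add: lookup_add)
      have le: "lookup a i \<le> lookup z i" for i using divq[OF fin q1 a b u eq] by blast
      have "smul ?q (z - a) + u = b"
      proof (rule poly_mapping_eqI)
        fix i show "lookup (smul ?q (z - a) + u) i = lookup b i"
          using eq[of i] le[of i] by (simp add: lookup_add lookup_minus diff_mult_distrib2)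
      qed
      then show False using False by blast
    qed
    then have "phi p e u (Poly_Mapping.single (smul ?q a + b) (c ^ ?q * c')) = 0"
      by (intro phi_miss) (metis)
    moreover have "phi p e u (Poly_Mapping.single b c') = 0"
      using False by (intro phi_miss) blast
    ultimately show ?thesis using lhs by simp
  qed
qed

lemma phi_linear:
  assumes fin: "finite P" and r: "\<forall>a\<in>keys r. incone P a" and x: "\<forall>b\<in>keys x. incone P b"
    and u: "good P (p ^ e) u"
  shows "phi p e u ((r::('a::order,'k) mpoly) ^ (p ^ e) * x) = r * phi p e u x"
proof -
  let ?q = "p ^ e"
  let ?R = "\<lambda>a. Poly_Mapping.single a (lookup r a)"
  let ?X = "\<lambda>b. Poly_Mapping.single b (lookup x b)"
  have "r ^ ?q * x = (\<Sum>a\<in>keys r. ?R a ^ ?q) * (\<Sum>b\<in>keys x. ?X b)"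
    using pm_sum_single[of r] pm_sum_single[of x] fd_sum[of ?R "keys r" e] by metis
  also have "\<dots> = (\<Sum>a\<in>keys r. \<Sum>b\<in>keys x. ?R a ^ ?q * ?X b)" by (rule sum_product)
  finally have "phi p e u (r ^ ?q * x) = (\<Sum>a\<in>keys r. \<Sum>b\<in>keys x. phi p e u (?R a ^ ?q * ?X b))"
    by (simp add: phi_sum)
  also have "\<dots> = (\<Sum>a\<in>keys r. \<Sum>b\<in>keys x. ?R a * phi p e u (?X b))"
    using phi_mono[OF fin _ _ u] r x by simp
  also have "\<dots> = (\<Sum>a\<in>keys r. ?R a) * (\<Sum>b\<in>keys x. phi p e u (?X b))"
    by (rule sum_product[symmetric])
  also have "\<dots> = r * phi p e u x"
    using pm_sum_single[of r] pm_sum_single[of x] by (metis phi_sum)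
  finally show ?thesis .
qed

lemma phi_in_R:
  assumes fin: "finite P" and u: "good P (p ^ e) u" and f: "(f::('a::order,'k) mpoly) \<in> hibi_ring P"
  shows "phi p e u f \<in> hibi_ring P"
proof (rule incone_in_R[OF fin], rule ballI)
  let ?q = "p ^ e"
  have q1: "?q \<ge> 1" using prime_gt_0_nat[OF prime] by simp
  fix z assume "z \<in> keys (phi p e u f)"
  then have "smul ?q z + u \<in> keys f" by (auto simp: in_keys_iff lookup_phi)
  then have b: "incone P (smul ?q z + u)" using R_incone[OF fin f] by blast
  have eq: "?q * lookup z i + lookup u i = ?q * lookup 0 i + lookup (smul ?q z + u) i" for i
    by (simp add: lookup_add)
  note d = divq[OF fin q1 incone_zero b u eq]
  have "keys z \<subseteq> insert None (Some ` P)"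
  proof
    fix i assume "i \<in> keys z" then show "i \<in> insert None (Some ` P)"
      using d by (cases i) (auto simp: in_keys_iff)
  qed
  then show "incone P z" using d by (simp add: incone_def)
qed

end



lemma lookup_single_mult: "lookup (Poly_Mapping.single (a::'m::cancel_comm_monoid_add) (c::'b::comm_semiring_1) * f) (a + k) = c * lookup f k"
proof -
  have "Poly_Mapping.single a c * f = (\<Sum>j\<in>keys f. Poly_Mapping.single (a + j) (c * lookup f j))"
    by (subst pm_sum_single[of f]) (simp add: sum_distrib_left mult_single)
  then have "lookup (Poly_Mapping.single a c * f) (a + k) = (\<Sum>j\<in>keys f. (c * lookup f j when a + j = a + k))"
    by (simp add: lookup_sum lookup_single)
  also have "\<dots> = (\<Sum>j\<in>keys f. (c * lookup f j when j = k))" by simp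
  also have "\<dots> = c * lookup f k" by (simp add: when_def in_keys_iff)
  finally show ?thesis .
qed

lemma keys_single_mult: "w \<in> keys (Poly_Mapping.single a (c::'b::comm_semiring_1) * f) \<Longrightarrow> \<exists>k\<in>keys f. w = a + k"
  using keys_mult[of "Poly_Mapping.single a c" f] by (auto split: if_splits)

context charp
begin

lemma Sigma_nonneg:
  assumes fin: "finite P" and psi: "\<psi> \<in> Sigma_set P" and x: "x \<in> ext_carrier P"
  shows "0 \<le> \<psi> x"
proof -
  have "\<psi> PosInf \<le> \<psi> x"
    by (rule mono_ext_posinf[OF fin _ x]) (use psi in \<open>auto simp: Sigma_set_def\<close>)
  then show ?thesis using psi by (simp add: Sigma_set_def)
qed

lemma lower_split:
  assumes fin: "finite P" and psi: "\<psi> \<in> Sigma_set P"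
  shows "\<exists>u. incone P u \<and> lookup u None = nat \<lfloor>(real (p ^ e) - 1) * \<psi> NegInf\<rfloor> \<and>
           frob_splits (hibi_ring P :: ('a::order,'k) mpoly set) (p ^ e) (Poly_Mapping.single u 1)"
proof -
  let ?q = "p ^ e"
  define c where "c = real ?q - 1"
  have q1: "?q \<ge> 1" using prime_gt_0_nat[OF prime] by simp
  have q1r: "(1::real) \<le> real ?q" using q1 by (metis of_nat_1 of_nat_le_iff)
  have c0: "c \<ge> 0" using q1r by (simp add: c_def)
  have cint: "c = of_int (int ?q - 1)" by (simp add: c_def)
  define uf where "uf i = (case i of None \<Rightarrow> nat \<lfloor>c * \<psi> NegInf\<rfloor>
      | Some a \<Rightarrow> if a \<in> P then nat \<lfloor>c * \<psi> (Elt a)\<rfloor> else 0)" for i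
  have "{i. uf i \<noteq> 0} \<subseteq> insert None (Some ` P)"
  proof
    fix i assume "i \<in> {i. uf i \<noteq> 0}" then show "i \<in> insert None (Some ` P)"
      by (cases i) (auto simp: uf_def split: if_splits)
  qed
  moreover have "finite (insert None (Some ` P))" using fin by simp
  ultimately have finu: "finite {i. uf i \<noteq> 0}" by (rule finite_subset)
  define u :: "'a mon" where "u = Abs_poly_mapping uf"
  have lu: "lookup u i = uf i" for i using finu by (simp add: u_def)
  have nn: "0 \<le> \<lfloor>c * \<psi> x\<rfloor>" if "x \<in> ext_carrier P" for x
    using Sigma_nonneg[OF fin psi that] c0 by simp
  have evu: "ev u x = \<lfloor>c * \<psi> x\<rfloor>" if "x \<in> ext_carrier P" for x
  proof (cases x)
    case NegInf then show ?thesis using nn[OF that] by (simp add: lu uf_def)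
  next
    case (Elt a) then show ?thesis using nn[OF that] that by (simp add: lu uf_def)
  next
    case PosInf then show ?thesis using psi by (simp add: Sigma_set_def)
  qed
  have cov: "0 \<le> ev u x - ev u y \<and> ev u x - ev u y \<le> int ?q - 1" if cv: "ext_covers P x y" for x y
  proof -
    have xy: "x \<in> ext_carrier P" "y \<in> ext_carrier P" using covers_D[OF cv] by auto
    have d: "0 \<le> \<psi> x - \<psi> y" "\<psi> x - \<psi> y \<le> 1" using psi cv by (auto simp: Sigma_set_def)
    have "c * \<psi> y \<le> c * \<psi> x" using d c0 by (simp add: mult_left_mono)
    then have 1: "\<lfloor>c * \<psi> y\<rfloor> \<le> \<lfloor>c * \<psi> x\<rfloor>" by (rule floor_mono)
    have "c * \<psi> x \<le> c * \<psi> y + of_int (int ?q - 1)" using d c0 cint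
      by (metis add.commute diff_le_eq mult.right_neutral mult_left_mono right_diff_distrib)
    then have "\<lfloor>c * \<psi> x\<rfloor> \<le> \<lfloor>c * \<psi> y + of_int (int ?q - 1)\<rfloor>" by (rule floor_mono)
    then have 2: "\<lfloor>c * \<psi> x\<rfloor> \<le> \<lfloor>c * \<psi> y\<rfloor> + (int ?q - 1)" by (simp only: floor_add_int)
    show ?thesis using 1 2 evu[OF xy(1)] evu[OF xy(2)] by simp
  qed
  have ucone: "incone P u"
  proof -
    have "keys u \<subseteq> insert None (Some ` P)"
      by (auto simp: in_keys_iff lu uf_def split: option.splits if_splits)
    then show ?thesis using cov by (auto simp: incone_def)
  qed
  have ug: "good P ?q u" using ucone cov by (simp add: good_def)
  have split: "frob_splits (hibi_ring P :: ('a,'k) mpoly set) ?q (Poly_Mapping.single u 1)"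
    unfolding frob_splits_def
  proof (intro exI[of _ "phi p e u"] conjI ballI)
    fix x :: "('a,'k) mpoly" assume "x \<in> hibi_ring P"
    then show "phi p e u x \<in> hibi_ring P" using phi_in_R[OF fin ug] by blast
  next
    fix x y :: "('a,'k) mpoly" show "phi p e u (x + y) = phi p e u x + phi p e u y" by (rule phi_add)
  next
    fix r x :: "('a,'k) mpoly" assume "r \<in> hibi_ring P" "x \<in> hibi_ring P"
    then show "phi p e u (r ^ ?q * x) = r * phi p e u x"
      using phi_linear[OF fin _ _ ug] R_incone[OF fin] by blast
  next
    have "phi p e u (Poly_Mapping.single (smul ?q 0 + u) (1::'k)) = Poly_Mapping.single 0 (froot ?q 1)"
      by (rule phi_hit)
    then show "phi p e u (Poly_Mapping.single u (1::'k)) = 1" by simp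
  qed
  show ?thesis using ucone split by (intro exI[of _ u]) (simp add: lu uf_def c_def)
qed

lemma pow_ge: "e < p ^ e"
proof -
  have "e < 2 ^ e" by (rule less_exp)
  also have "(2::nat) ^ e \<le> p ^ e" using prime_ge_2_nat[OF prime] by (rule power_mono) simp
  finally show ?thesis .
qed

lemma Fpure_lower:
  assumes fin: "finite P" and psi: "\<psi> \<in> Sigma_set P" and t0: "0 \<le> t"
    and tl: "t = 0 \<or> t < \<psi> NegInf"
  shows "F_pure_pair p (hibi_ring P :: ('a::order,'k) mpoly set) (hibi_max P) t"
proof -
  obtain e0 where e0: "\<And>e. e \<ge> e0 \<Longrightarrow> \<lceil>t * (real (p ^ e) - 1)\<rceil> \<le> \<lfloor>(real (p ^ e) - 1) * \<psi> NegInf\<rfloor>"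
  proof (cases "t = 0")
    case True
    have "0 \<le> \<lfloor>(real (p ^ e) - 1) * \<psi> NegInf\<rfloor>" for e
    proof -
      have "0 \<le> real (p ^ e) - 1" using prime_gt_0_nat[OF prime] by simp
      then show ?thesis using Sigma_nonneg[OF fin psi, of NegInf] by simp
    qed
    then show ?thesis using True that by simp
  next
    case False
    then have lt: "t < \<psi> NegInf" using tl by simp
    define e0 where "e0 = nat \<lceil>1 / (\<psi> NegInf - t)\<rceil>"
    show ?thesis
    proof (rule that)
      fix e assume "e \<ge> e0"
      let ?c = "real (p ^ e) - 1"
      have "1 / (\<psi> NegInf - t) \<le> real e0" unfolding e0_def by linarith
      also have "\<dots> \<le> real e" using \<open>e \<ge> e0\<close> by simp
      also have "\<dots> \<le> ?c" using pow_ge[of e] by linarith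
      finally have "1 \<le> ?c * (\<psi> NegInf - t)" using lt by (simp add: field_simps)
      then have "t * ?c + 1 \<le> ?c * \<psi> NegInf" by (simp add: algebra_simps)
      then have "\<lfloor>t * ?c + 1\<rfloor> \<le> \<lfloor>?c * \<psi> NegInf\<rfloor>" by (rule floor_mono)
      moreover have "\<lceil>t * ?c\<rceil> \<le> \<lfloor>t * ?c + 1\<rfloor>" by linarith
      ultimately show "\<lceil>t * ?c\<rceil> \<le> \<lfloor>?c * \<psi> NegInf\<rfloor>" by linarith
    qed
  qed
  show ?thesis unfolding F_pure_pair_def
  proof (intro exI[of _ e0] allI impI)
    fix e assume "e0 \<le> e"
    obtain u where u: "incone P u" "lookup u None = nat \<lfloor>(real (p ^ e) - 1) * \<psi> NegInf\<rfloor>"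
      "frob_splits (hibi_ring P :: ('a,'k) mpoly set) (p ^ e) (Poly_Mapping.single u 1)"
      using lower_split[OF fin psi, of e] by blast
    have "nat \<lceil>t * (real (p ^ e) - 1)\<rceil> \<le> lookup u None"
      unfolding u(2) by (rule nat_mono[OF e0[OF \<open>e0 \<le> e\<close>]])
    then have "Poly_Mapping.single u (1::'k) \<in> ideal_pow (hibi_ring P) (hibi_max P) (nat \<lceil>t * (real (p ^ e) - 1)\<rceil>)"
      using mono_in_pow[OF fin u(1)] by blast
    then show "\<exists>d\<in>ideal_pow (hibi_ring P) (hibi_max P) (nat \<lceil>t * (real (p ^ e) - 1)\<rceil>).
        frob_splits (hibi_ring P :: ('a,'k) mpoly set) (p ^ e) d" using u(3) by blast
  qed
qed

end



lemma ext_le_trans: "ext_le x y \<Longrightarrow> ext_le y z \<Longrightarrow> ext_le x z"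
  unfolding ext_le_def using ext_less_trans by blast

lemma ext_le_refl[simp]: "ext_le x x" by (simp add: ext_le_def)

lemma ext_le_Elt: "ext_le (Elt a) (Elt b) \<longleftrightarrow> a \<le> b"
  by (auto simp: ext_le_def order.order_iff_strict)

lemma ext_less_not_le: "ext_less x y \<Longrightarrow> \<not> ext_le y x"
  unfolding ext_le_def using ext_less_asym by auto

definition down :: "'a::order set \<Rightarrow> 'a ext \<Rightarrow> 'a set" where
  "down P z = {a\<in>P. ext_le (Elt a) z}"

definition upc :: "'a::order set \<Rightarrow> 'a ext \<Rightarrow> 'a set" where
  "upc P z = {a\<in>P. \<not> ext_le z (Elt a)}"

lemma down_ideal: "down P z \<in> poset_ideals P"
  unfolding down_def poset_ideals_def using ext_le_trans ext_le_Elt by blast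

lemma upc_ideal: "upc P z \<in> poset_ideals P"
  unfolding upc_def poset_ideals_def using ext_le_trans ext_le_Elt by blast

lemma ev_down:
  assumes fin: "finite P" and z: "z \<noteq> PosInf" and v: "v \<in> ext_carrier P"
  shows "ev (gexp (down P z)) v = (if ext_le v z then 1 else 0)"
proof -
  have f: "finite (down P z)" using fin by (simp add: down_def)
  show ?thesis
  proof (cases v)
    case NegInf
    have "lookup (gexp (down P z)) None = 1" by (rule lookup_gexp(1)[OF f])
    then show ?thesis using z NegInf by (cases z) (auto simp: ext_le_def)
  next
    case (Elt a) then show ?thesis using v lookup_gexp(2)[OF f, of a] by (auto simp: down_def)
  next
    case PosInf then show ?thesis using z by (cases z) (auto simp: ext_le_def)
  qed
qed

lemma ev_upc:
  assumes fin: "finite P" and z: "z \<noteq> NegInf" and v: "v \<in> ext_carrier P"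
  shows "ev (gexp (upc P z)) v = (if ext_le z v then 0 else 1)"
proof -
  have f: "finite (upc P z)" using fin by (simp add: upc_def)
  show ?thesis
  proof (cases v)
    case NegInf
    have "lookup (gexp (upc P z)) None = 1" by (rule lookup_gexp(1)[OF f])
    then show ?thesis using z NegInf by (cases z) (auto simp: ext_le_def)
  next
    case (Elt a) then show ?thesis using v lookup_gexp(2)[OF f, of a] by (auto simp: upc_def)
  next
    case PosInf then show ?thesis using z by (cases z) (auto simp: ext_le_def)
  qed
qed

lemma cover_unique:
  assumes c: "ext_covers P x y" and c': "ext_covers P x' y'"
    and l1: "ext_le x x'" and l2: "ext_le y' y"
  shows "x' = x \<and> y' = y"
proof -
  have cx: "x \<in> ext_carrier P" "y \<in> ext_carrier P" "ext_less x y"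
    "\<not> (\<exists>z\<in>ext_carrier P. ext_less x z \<and> ext_less z y)" using c by (auto simp: ext_covers_def)
  have cx': "x' \<in> ext_carrier P" "y' \<in> ext_carrier P" "ext_less x' y'" using covers_D[OF c'] by auto
  have "x' = x"
  proof (rule ccontr)
    assume "x' \<noteq> x"
    then have "ext_less x x'" using l1 by (simp add: ext_le_def)
    moreover have "ext_less x' y" using cx'(3) l2 ext_less_le_trans by blast
    ultimately show False using cx(4) cx'(1) by blast
  qed
  moreover have "y' = y"
  proof (rule ccontr)
    assume "y' \<noteq> y"
    then have "ext_less y' y" using l2 by (simp add: ext_le_def)
    moreover have "ext_less x y'" using cx'(3) l1 ext_le_less_trans by blast
    ultimately show False using cx(4) cx'(2) by blast
  qed
  ultimately show ?thesis by simp
qed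

context charp
begin

lemma facet:
  assumes fin: "finite P" and w: "incone P w"
    and phiR: "\<forall>x\<in>hibi_ring P. (\<phi>::('a::order,'k) mpoly \<Rightarrow> ('a,'k) mpoly) x \<in> hibi_ring P"
    and phiL: "\<forall>r\<in>hibi_ring P. \<forall>x\<in>hibi_ring P. \<phi> (r ^ (p ^ e) * x) = r * \<phi> x"
    and nz: "lookup (\<phi> (Poly_Mapping.single w 1)) 0 \<noteq> 0"
    and cv: "ext_covers P x y"
  shows "ev w x - ev w y \<le> int (p ^ e) - 1"
proof (rule ccontr)
  let ?q = "p ^ e"
  assume "\<not> ?thesis"
  then have big: "ev w x - ev w y \<ge> int ?q" by simp
  have cxy: "x \<in> ext_carrier P" "y \<in> ext_carrier P" "ext_less x y" using covers_D[OF cv] by auto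
  have xP: "x \<noteq> PosInf" using cxy(3) by (cases x) auto
  define J where "J = down P x"
  define gJ where "gJ = gexp J"
  have Jid: "J \<in> poset_ideals P" unfolding J_def by (rule down_ideal)
  have gJc: "incone P gJ" unfolding gJ_def by (rule incone_gexp[OF fin Jid])
  have evJ: "v \<in> ext_carrier P \<Longrightarrow> ev gJ v = (if ext_le v x then 1 else 0)" for v
    unfolding gJ_def J_def by (rule ev_down[OF fin xP])
  have sJF: "ev gJ x - ev gJ y = 1" using evJ cxy ext_less_not_le by simp
  have sJ1: "ev gJ x' - ev gJ y' \<le> 1" if "ext_covers P x' y'" for x' y'
    using evJ covers_D[OF that] by simp
  define NF where "NF = {I\<in>poset_ideals P. ev (gexp I) x = ev (gexp I) y}"
  have finNF: "finite NF"
  proof -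
    have "NF \<subseteq> Pow P" by (auto simp: NF_def poset_ideals_def)
    then show ?thesis using fin by (meson finite_Pow_iff finite_subset)
  qed
  define bb where "bb = (\<Sum>I\<in>NF. gexp I)"
  have bbc: "incone P bb" unfolding bb_def
    by (rule incone_sum) (auto simp: NF_def intro: incone_gexp[OF fin])
  have evbb: "ev bb v = (\<Sum>I\<in>NF. ev (gexp I) v)" for v by (simp add: bb_def ev_sum)
  have sbF: "ev bb x - ev bb y = 0"
    by (simp add: evbb sum_subtractf[symmetric] NF_def)
  have sbG: "ev bb x' - ev bb y' \<ge> 1" if cG: "ext_covers P x' y'" and ne: "(x', y') \<noteq> (x, y)" for x' y'
  proof -
    have cG': "x' \<in> ext_carrier P" "y' \<in> ext_carrier P" "ext_less x' y'" using covers_D[OF cG] by auto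
    have x'P: "x' \<noteq> PosInf" using cG'(3) by (cases x') auto
    have y'N: "y' \<noteq> NegInf" using cG'(3) by (cases x'; cases y') auto
    have nonneg: "0 \<le> ev (gexp I) x' - ev (gexp I) y'" if "I \<in> NF" for I
      using incone_gexp[OF fin] that cG by (auto simp: NF_def incone_def)
    have "\<exists>I\<in>NF. ev (gexp I) x' - ev (gexp I) y' = 1"
    proof (rule ccontr)
      assume nex: "\<not> ?thesis"
      have s1: "ev (gexp (down P x')) x' - ev (gexp (down P x')) y' = 1"
        using ev_down[OF fin x'P] cG' ext_less_not_le by simp
      have s2: "ev (gexp (upc P y')) x' - ev (gexp (upc P y')) y' = 1"
        using ev_upc[OF fin y'N] cG' ext_less_not_le by simp
      have n1: "down P x' \<notin> NF" using nex s1 by blast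
      have n2: "upc P y' \<notin> NF" using nex s2 by blast
      have "ev (gexp (down P x')) x \<noteq> ev (gexp (down P x')) y" using n1 down_ideal by (auto simp: NF_def)
      then have "(if ext_le x x' then 1 else 0) \<noteq> (if ext_le y x' then (1::int) else 0)"
        using ev_down[OF fin x'P] cxy by simp
      moreover have "ext_le y x' \<Longrightarrow> ext_le x x'"
        using cxy(3) ext_le_trans ext_le_def by blast
      ultimately have l1: "ext_le x x'" by (auto split: if_splits)
      have "ev (gexp (upc P y')) x \<noteq> ev (gexp (upc P y')) y" using n2 upc_ideal by (auto simp: NF_def)
      then have "(if ext_le y' x then 0 else 1) \<noteq> (if ext_le y' y then 0 else (1::int))"
        using ev_upc[OF fin y'N] cxy by simp
      moreover have "ext_le y' x \<Longrightarrow> ext_le y' y"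
        using cxy(3) ext_le_trans ext_le_def by blast
      ultimately have l2: "ext_le y' y" by (auto split: if_splits)
      show False using cover_unique[OF cv cG l1 l2] ne by simp
    qed
    then obtain I0 where I0: "I0 \<in> NF" "ev (gexp I0) x' - ev (gexp I0) y' = 1" by blast
    have "ev (gexp I0) x' - ev (gexp I0) y' \<le> (\<Sum>I\<in>NF. ev (gexp I) x' - ev (gexp I) y')"
      by (rule member_le_sum[OF I0(1)]) (use nonneg finNF in auto)
    then show ?thesis using I0(2) by (simp add: evbb sum_subtractf)
  qed
  define W where "W v = ev w v + int ?q * ev bb v - int ?q * ev gJ v" for v
  have Wcov: "W y' \<le> W x'" if cG: "ext_covers P x' y'" for x' y'
  proof (cases "(x', y') = (x, y)")
    case True
    then show ?thesis using big sJF sbF by (auto simp: W_def algebra_simps)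
  next
    case False
    have a: "ev w y' \<le> ev w x'" using w cG by (simp add: incone_def)
    have b: "ev bb x' - ev bb y' \<ge> 1" using sbG[OF cG False] .
    have c: "ev gJ x' - ev gJ y' \<le> 1" using sJ1[OF cG] .
    have "int ?q * (ev gJ x' - ev gJ y') \<le> int ?q * (ev bb x' - ev bb y')"
      using b c by (intro mult_left_mono) auto
    then show ?thesis using a by (simp add: W_def algebra_simps)
  qed
  have W0: "0 \<le> W v" if "v \<in> ext_carrier P" for v
    using mono_ext_posinf[of P W v, OF fin Wcov that] by (simp add: W_def)
  define wf where "wf i = (case i of None \<Rightarrow> nat (W NegInf)
      | Some a \<Rightarrow> if a \<in> P then nat (W (Elt a)) else 0)" for i
  have "{i. wf i \<noteq> 0} \<subseteq> insert None (Some ` P)"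
  proof
    fix i assume "i \<in> {i. wf i \<noteq> 0}" then show "i \<in> insert None (Some ` P)"
      by (cases i) (auto simp: wf_def split: if_splits)
  qed
  moreover have "finite (insert None (Some ` P))" using fin by simp
  ultimately have finw: "finite {i. wf i \<noteq> 0}" by (rule finite_subset)
  define w' :: "'a mon" where "w' = Abs_poly_mapping wf"
  have lw': "lookup w' i = wf i" for i using finw by (simp add: w'_def)
  have evw': "ev w' v = W v" if "v \<in> ext_carrier P" for v
  proof (cases v)
    case NegInf then show ?thesis using W0[OF that] by (simp add: lw' wf_def)
  next
    case (Elt a) then show ?thesis using W0[OF that] that by (simp add: lw' wf_def)
  next
    case PosInf then show ?thesis by (simp add: W_def)
  qed
  have w'c: "incone P w'"
  proof -
    have "keys w' \<subseteq> insert None (Some ` P)"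
    proof
      fix i assume "i \<in> keys w'" then show "i \<in> insert None (Some ` P)"
        by (cases i) (auto simp: in_keys_iff lw' wf_def split: if_splits)
    qed
    moreover have "ev w' y' \<le> ev w' x'" if "ext_covers P x' y'" for x' y'
      using Wcov[OF that] evw' covers_D[OF that] by simp
    ultimately show ?thesis by (simp add: incone_def)
  qed
  have eqm: "smul ?q gJ + w' = w + smul ?q bb"
  proof (rule poly_mapping_eqI)
    fix i
    show "lookup (smul ?q gJ + w') i = lookup (w + smul ?q bb) i"
    proof (cases i)
      case None
      have "int (lookup (smul ?q gJ + w') i) = int (lookup (w + smul ?q bb) i)"
        using None W0[of NegInf] by (simp add: lookup_add lw' wf_def W_def)
      then show ?thesis by simp
    next
      case (Some a)
      show ?thesis
      proof (cases "a \<in> P")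
        case True
        have "int (lookup (smul ?q gJ + w') i) = int (lookup (w + smul ?q bb) i)"
          using Some True W0[of "Elt a"] by (simp add: lookup_add lw' wf_def W_def)
        then show ?thesis by simp
      next
        case False
        then show ?thesis using Some incone_outside[OF gJc False] incone_outside[OF w False]
          incone_outside[OF bbc False] by (simp add: lookup_add lw' wf_def)
      qed
    qed
  qed
  have Rb: "Poly_Mapping.single bb (1::'k) \<in> hibi_ring P" by (rule mono_in_R[OF fin bbc])
  have Rw: "Poly_Mapping.single w (1::'k) \<in> hibi_ring P" by (rule mono_in_R[OF fin w])
  have RJ: "Poly_Mapping.single gJ (1::'k) \<in> hibi_ring P" by (rule mono_in_R[OF fin gJc])
  have Rw': "Poly_Mapping.single w' (1::'k) \<in> hibi_ring P" by (rule mono_in_R[OF fin w'c])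
  have "Poly_Mapping.single bb (1::'k) ^ ?q * Poly_Mapping.single w 1
      = Poly_Mapping.single gJ 1 ^ ?q * Poly_Mapping.single w' 1"
    using eqm by (simp add: single_pow mult_single add.commute)
  then have key: "Poly_Mapping.single bb 1 * \<phi> (Poly_Mapping.single w 1)
      = Poly_Mapping.single gJ 1 * \<phi> (Poly_Mapping.single w' 1)"
    using phiL Rb Rw RJ Rw' by metis
  have "lookup (Poly_Mapping.single bb 1 * \<phi> (Poly_Mapping.single w 1)) (bb + 0) \<noteq> 0"
    using nz by (simp only: lookup_single_mult) simp
  moreover have "lookup (Poly_Mapping.single gJ (1::'k) * \<phi> (Poly_Mapping.single w' 1)) bb = 0"
  proof (rule ccontr)
    assume "\<not> ?thesis"
    then have "bb \<in> keys (Poly_Mapping.single gJ (1::'k) * \<phi> (Poly_Mapping.single w' 1))"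
      by (simp add: in_keys_iff)
    then obtain k where k: "k \<in> keys (\<phi> (Poly_Mapping.single w' 1))" "bb = gJ + k"
      using keys_single_mult by blast
    have "\<phi> (Poly_Mapping.single w' 1) \<in> hibi_ring P" using phiR Rw' by blast
    then have "incone P k" using R_incone[OF fin] k(1) by blast
    then have "ev k y \<le> ev k x" using cv by (simp add: incone_def)
    then show False using sbF sJF k(2) by simp
  qed
  ultimately show False using key by simp
qed

lemma Fpure_upper:
  assumes fin: "finite P" and t0: "0 \<le> t"
    and fp: "F_pure_pair p (hibi_ring P :: ('a::order,'k) mpoly set) (hibi_max P) t"
  shows "\<exists>\<psi>\<in>Sigma_set P. t \<le> \<psi> NegInf"
proof -
  obtain e0 where e0: "\<And>e. e \<ge> e0 \<Longrightarrow> \<exists>d\<in>ideal_pow (hibi_ring P) (hibi_max P) (nat \<lceil>t * (real (p ^ e) - 1)\<rceil>).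
      frob_splits (hibi_ring P :: ('a,'k) mpoly set) (p ^ e) d"
    using fp unfolding F_pure_pair_def by blast
  define e where "e = Suc e0"
  let ?q = "p ^ e"
  let ?n = "nat \<lceil>t * (real ?q - 1)\<rceil>"
  have q2: "?q \<ge> 2"
  proof -
    have "p \<le> p ^ e" using prime_gt_0_nat[OF prime] by (simp add: e_def)
    then show ?thesis using prime_ge_2_nat[OF prime] by simp
  qed
  obtain d where d: "d \<in> ideal_pow (hibi_ring P) (hibi_max P) ?n"
    "frob_splits (hibi_ring P :: ('a,'k) mpoly set) ?q d" using e0[of e] by (auto simp: e_def)
  obtain \<phi> :: "('a,'k) mpoly \<Rightarrow> ('a,'k) mpoly" where
    phiR: "\<forall>x\<in>hibi_ring P. \<phi> x \<in> hibi_ring P" and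
    phiA: "\<forall>x\<in>hibi_ring P. \<forall>y\<in>hibi_ring P. \<phi> (x + y) = \<phi> x + \<phi> y" and
    phiL: "\<forall>r\<in>hibi_ring P. \<forall>x\<in>hibi_ring P. \<phi> (r ^ ?q * x) = r * \<phi> x" and
    phi1: "\<phi> d = 1"
    using d(2) unfolding frob_splits_def by blast
  have dR: "d \<in> Rge P ?n" using pow_sub_Rge[OF fin] d(1) by blast
  then have dRR: "d \<in> hibi_ring P" by (simp add: Rge_def)
  have dkeys: "\<forall>w\<in>keys d. incone P w" using R_incone[OF fin dRR] .
  define T where "T w = Poly_Mapping.single 0 (froot ?q (lookup d w)) ^ ?q * Poly_Mapping.single w (1::'k)" for w
  have Teq: "T w = Poly_Mapping.single w (lookup d w)" for w
    by (simp add: T_def single_pow mult_single)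
  have TR: "T w \<in> hibi_ring P" if "w \<in> keys d" for w
    unfolding Teq using dkeys that by (intro incone_in_R[OF fin]) (auto split: if_splits)
  have phi_sumR: "\<phi> (sum f A) = (\<Sum>i\<in>A. \<phi> (f i))" if "finite A" "\<And>i. i \<in> A \<Longrightarrow> f i \<in> hibi_ring P" for f A
    using that
  proof (induction A rule: finite_induct)
    case empty
    have "\<phi> 0 = \<phi> 0 + \<phi> 0" using phiA zero_in_R by (metis add_0)
    then show ?case by simp
  next
    case (insert a A)
    then have "\<phi> (f a + sum f A) = \<phi> (f a) + \<phi> (sum f A)" using phiA sum_in_R[of A f P] by simp
    then show ?case using insert by simp
  qed
  have "d = (\<Sum>w\<in>keys d. T w)" unfolding Teq by (rule pm_sum_single)
  then have "\<phi> d = (\<Sum>w\<in>keys d. \<phi> (T w))" using phi_sumR[of "keys d" T] TR by simp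
  also have "\<dots> = (\<Sum>w\<in>keys d. Poly_Mapping.single 0 (froot ?q (lookup d w)) * \<phi> (Poly_Mapping.single w 1))"
  proof (rule sum.cong[OF refl])
    fix w assume "w \<in> keys d"
    then have "Poly_Mapping.single w (1::'k) \<in> hibi_ring P" using mono_in_R[OF fin] dkeys by blast
    moreover have "Poly_Mapping.single 0 (froot ?q (lookup d w)) \<in> hibi_ring P" by (rule hibi_ring.const)
    ultimately show "\<phi> (T w) = Poly_Mapping.single 0 (froot ?q (lookup d w)) * \<phi> (Poly_Mapping.single w 1)"
      using phiL unfolding T_def by blast
  qed
  finally have "1 = (\<Sum>w\<in>keys d. Poly_Mapping.single 0 (froot ?q (lookup d w)) * \<phi> (Poly_Mapping.single w 1))"
    using phi1 by simp
  then have "lookup (1::('a,'k) mpoly) 0 = lookup (\<Sum>w\<in>keys d. Poly_Mapping.single 0 (froot ?q (lookup d w)) * \<phi> (Poly_Mapping.single w 1)) 0"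
    by (rule arg_cong)
  also have "\<dots> = (\<Sum>w\<in>keys d. froot ?q (lookup d w) * lookup (\<phi> (Poly_Mapping.single w 1)) 0)"
  proof -
    have l0: "lookup (Poly_Mapping.single 0 c * f) 0 = c * lookup f 0" for c :: 'k and f :: "('a,'k) mpoly"
      using lookup_single_mult[of 0 c f 0] by simp
    show ?thesis by (simp add: lookup_sum l0)
  qed
  finally have "lookup (1::('a,'k) mpoly) 0 = (\<Sum>w\<in>keys d. froot ?q (lookup d w) * lookup (\<phi> (Poly_Mapping.single w 1)) 0)" .
  then obtain w where w: "w \<in> keys d" "lookup (\<phi> (Poly_Mapping.single w (1::'k))) 0 \<noteq> 0"
    by (metis (no_types, lifting) lookup_one_zero mult_zero_right sum.neutral zero_neq_one)
  have wc: "incone P w" using dkeys w(1) by blast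
  have bound: "ev w x - ev w y \<le> int ?q - 1" if "ext_covers P x y" for x y
    using facet[OF fin wc phiR phiL w(2) that] .
  have nw: "?n \<le> lookup w None" using dR w(1) by (simp add: Rge_def)
  define c where "c = real ?q - 1"
  have q2r: "(2::real) \<le> real ?q" using q2 by (metis of_nat_numeral of_nat_le_iff)
  have c1: "c \<ge> 1" using q2r unfolding c_def by linarith
  define \<psi> where "\<psi> v = real_of_int (ev w v) / c" for v
  have psiS: "\<psi> \<in> Sigma_set P"
  proof -
    have "0 \<le> \<psi> x - \<psi> y \<and> \<psi> x - \<psi> y \<le> 1" if cv: "ext_covers P x y" for x y
    proof -
      have a: "ev w y \<le> ev w x" using wc cv by (simp add: incone_def)
      have b0: "real_of_int (ev w x - ev w y) \<le> real_of_int (int ?q - 1)"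
        using bound[OF cv] by (simp only: of_int_le_iff)
      have "real_of_int (int ?q - 1) = c" by (simp add: c_def)
      then have b: "real_of_int (ev w x - ev w y) \<le> c" using b0 by simp
      have "\<psi> x - \<psi> y = real_of_int (ev w x - ev w y) / c" by (simp add: \<psi>_def diff_divide_distrib)
      then show ?thesis using a b c1 by (simp add: divide_le_eq_1)
    qed
    then show ?thesis by (simp add: Sigma_set_def \<psi>_def)
  qed
  have "t * c \<le> real ?n" using c1 by (simp add: c_def) linarith
  also have "\<dots> \<le> real (lookup w None)" using nw by simp
  finally have "t \<le> real (lookup w None) / c" using c1 by (simp add: field_simps)
  then show ?thesis using psiS by (intro bexI[of _ \<psi>]) (simp_all add: \<psi>_def)
qed

end



lemma Sigma_ceil:
  assumes psi: "\<psi> \<in> Sigma_set P"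
  shows "(\<lambda>x. real_of_int \<lceil>\<psi> x\<rceil>) \<in> Sigma_set P"
proof -
  have "0 \<le> real_of_int \<lceil>\<psi> x\<rceil> - real_of_int \<lceil>\<psi> y\<rceil> \<and> real_of_int \<lceil>\<psi> x\<rceil> - real_of_int \<lceil>\<psi> y\<rceil> \<le> 1"
    if c: "ext_covers P x y" for x y
  proof -
    have d0: "0 \<le> \<psi> x - \<psi> y" "\<psi> x - \<psi> y \<le> 1" using psi c by (auto simp: Sigma_set_def)
    then have d: "\<psi> y \<le> \<psi> x" "\<psi> x \<le> \<psi> y + 1" by linarith+
    have 1: "\<lceil>\<psi> y\<rceil> \<le> \<lceil>\<psi> x\<rceil>" using d(1) by (rule ceiling_mono)
    have "\<lceil>\<psi> x\<rceil> \<le> \<lceil>\<psi> y + 1\<rceil>" using d(2) by (rule ceiling_mono)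
    then have 2: "\<lceil>\<psi> x\<rceil> \<le> \<lceil>\<psi> y\<rceil> + 1" by simp
    show ?thesis using 1 2 by linarith
  qed
  then show ?thesis using psi by (simp add: Sigma_set_def)
qed

lemma zero_Sigma: "(\<lambda>x. 0) \<in> Sigma_set P"
  by (simp add: Sigma_set_def)

theorem theorem3p7:
  fixes P :: "'a::order set" and p :: nat
  assumes "finite P"
    and "prime p" and "CHAR('k::field) = p"
    and "\<forall>x::'k. \<exists>y. y ^ p = x"
  shows "(\<exists>\<psi>\<in>Sigma_set P.
            fpt p (hibi_ring P :: ('a, 'k) mpoly set) (hibi_max P) = \<psi> NegInf)
       \<and> (\<forall>\<psi>\<in>Sigma_set P.
            \<psi> NegInf \<le> fpt p (hibi_ring P :: ('a, 'k) mpoly set) (hibi_max P))"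
proof -
  interpret charp p "TYPE('k)" using assms(2-4) by unfold_locales auto
  note fin = assms(1)
  define B where "B = card (ext_carrier P)"
  have bnd: "\<psi> NegInf \<le> real B" if "\<psi> \<in> Sigma_set P" for \<psi>
  proof -
    have "\<psi> NegInf \<le> real (card {z\<in>ext_carrier P. ext_less NegInf z})"
      using Sigma_bound[OF fin that, of NegInf] by simp
    also have "card {z\<in>ext_carrier P. ext_less NegInf z} \<le> B"
      unfolding B_def by (rule card_mono[OF finite_carrier[OF fin]]) auto
    finally show ?thesis by simp
  qed
  define N where "N = {n::nat. n \<le> B \<and> (\<exists>\<psi>\<in>Sigma_set P. \<psi> NegInf = real n)}"
  have finN: "finite N" by (simp add: N_def)
  have N0: "0 \<in> N" using zero_Sigma by (force simp: N_def)
  define M where "M = Max N"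
  have MN: "M \<in> N" unfolding M_def using finN N0 by (intro Max_in) auto
  then obtain \<psi>0 where psi0: "\<psi>0 \<in> Sigma_set P" "\<psi>0 NegInf = real M" by (auto simp: N_def)
  have leM: "\<psi> NegInf \<le> real M" if psi: "\<psi> \<in> Sigma_set P" for \<psi>
  proof -
    let ?c = "\<lambda>x. real_of_int \<lceil>\<psi> x\<rceil>"
    have cS: "?c \<in> Sigma_set P" by (rule Sigma_ceil[OF psi])
    have nn: "0 \<le> \<lceil>\<psi> NegInf\<rceil>" using Sigma_nonneg[OF fin psi, of NegInf] by simp
    define n where "n = nat \<lceil>\<psi> NegInf\<rceil>"
    have cn: "?c NegInf = real n" using nn by (simp add: n_def)
    have "real n \<le> real B" using bnd[OF cS] cn by simp
    then have "n \<in> N" using cS cn by (auto simp: N_def)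
    then have "n \<le> M" using finN by (simp add: M_def)
    moreover have "\<psi> NegInf \<le> real n" using cn by (metis le_of_int_ceiling)
    ultimately show ?thesis by simp
  qed
  define S where "S = {t. t \<ge> 0 \<and> F_pure_pair p (hibi_ring P :: ('a, 'k) mpoly set) (hibi_max P) t}"
  have Sle: "t \<le> real M" if "t \<in> S" for t
  proof -
    have t: "0 \<le> t" "F_pure_pair p (hibi_ring P :: ('a, 'k) mpoly set) (hibi_max P) t"
      using that by (simp_all add: S_def)
    obtain \<psi> where "\<psi> \<in> Sigma_set P" "t \<le> \<psi> NegInf"
      using Fpure_upper[OF fin t] by blast
    then show ?thesis using leM by fastforce
  qed
  have S0: "0 \<in> S" using Fpure_lower[OF fin psi0(1), of 0] by (simp add: S_def)
  have Sin: "t \<in> S" if "0 \<le> t" "t < real M" for t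
    using Fpure_lower[OF fin psi0(1), of t] that psi0(2) by (simp add: S_def)
  have bdd: "bdd_above S" using Sle by (auto simp: bdd_above_def)
  have ne: "S \<noteq> {}" using S0 by blast
  have up: "Sup S \<le> real M" using ne Sle by (rule cSup_least)
  have sup0: "0 \<le> Sup S" using cSup_upper[OF S0 bdd] .
  have lo: "real M \<le> Sup S"
  proof (rule ccontr)
    assume "\<not> ?thesis"
    then have lt: "Sup S < real M" by simp
    let ?t = "(Sup S + real M) / 2"
    have "?t \<in> S" using Sin[of ?t] lt sup0 by simp
    then have "?t \<le> Sup S" using cSup_upper[OF _ bdd] by blast
    then show False using lt by simp
  qed
  have fptM: "fpt p (hibi_ring P :: ('a, 'k) mpoly set) (hibi_max P) = real M"
    unfolding fpt_def S_def[symmetric] using up lo by simp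
  show ?thesis unfolding fptM using psi0 leM by (metis)
qed


end
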